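(* Let $D$ be a square-free integer, let $\mathbb{Z}[\sqrt{D}]$ denote the ring of integers of $\mathbb{Q}(\sqrt{D})$, and let $p$ be a prime integer which is irreducible but not prime in $\mathbb{Z}[\sqrt{D}]$. For $z\in I_p(D)$, the matrix $A(p,z)$ has property (CZ) if and only if the matrix $A(p,\bar z)$ has property (CZ).
   Context: Here $\mathbb{Z}[\sqrt{D}]=\{a+b\sqrt{D}:a,b\in\mathbb{Z}\}$ if $D\equiv 2,3 \pmod 4$ and $\mathbb{Z}[\sqrt{D}]=\{\frac{a+b\sqrt{D}}{2}:a,b\in\mathbb{Z},\ a\equiv b \pmod 2\}$ if $D\equiv 1\pmod 4$. $\bar z$ denotes the conjugate and $\lVert z\rVert=z\bar z$ the norm. $I_p(D)$ is the set of all non-unit $z\in\mathbb{Z}[\sqrt{D}]$ such that $z\notin\langle p\rangle$ but there exists $m\notin\langle p\rangle$ with $zm\in\langle p\rangle$ (for such $z$, $p$ divides $\lVert z\rVert$). For $z\in I_p(D)$, $A(p,z)=\begin{pmatrix} p & z\\ \bar z & \lVert z\rVert/p\end{pmatrix}$. A matrix $A(p,z)$ has property (CZ) if there exist $a,b,c\in\mathbb{Z}[\sqrt{D}]$ with $a(1-a)=bc$ such that $A(p,z)=\begin{pmatrix} a&b\\ c&1-a\end{pmatrix}\begin{pmatrix}\bar a&\bar c\\ \bar b&1-\bar a\end{pmatrix}$. *)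

theory Defs
  imports "HOL-Analysis.Analysis" "HOL-Computational_Algebra.Squarefree"
begin

text \<open>Elements of Q(sqrt D) are modelled inside the complex numbers, with
  sqrt D realised as the positive real square root if D \<ge> 0 and as
  i * sqrt(-D) if D < 0.\<close>

definition sqrtD :: "int \<Rightarrow> complex" where
  "sqrtD D = (if D \<ge> 0 then complex_of_real (sqrt (real_of_int D))
              else \<i> * complex_of_real (sqrt (real_of_int (- D))))"

definition ZD :: "int \<Rightarrow> complex set" where
  "ZD D = (if D mod 4 = 1
           then {(of_int a + of_int b * sqrtD D) / 2 | a b :: int. a mod 2 = b mod 2}
           else {of_int a + of_int b * sqrtD D | a b :: int. True})"

definition qcnj :: "int \<Rightarrow> complex \<Rightarrow> complex" where
  "qcnj D z = (THE w. \<exists>x y :: rat. z = of_rat x + of_rat y * sqrtD D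
                                   \<and> w = of_rat x - of_rat y * sqrtD D)"

definition qnorm :: "int \<Rightarrow> complex \<Rightarrow> complex" where
  "qnorm D z = z * qcnj D z"

definition unitD :: "int \<Rightarrow> complex \<Rightarrow> bool" where
  "unitD D z \<longleftrightarrow> z \<in> ZD D \<and> (\<exists>w \<in> ZD D. z * w = 1)"

definition dvdD :: "int \<Rightarrow> complex \<Rightarrow> complex \<Rightarrow> bool" where
  "dvdD D a b \<longleftrightarrow> (\<exists>c \<in> ZD D. b = a * c)"

definition irreducibleD :: "int \<Rightarrow> complex \<Rightarrow> bool" where
  "irreducibleD D p \<longleftrightarrow> p \<in> ZD D \<and> p \<noteq> 0 \<and> \<not> unitD D p \<and>
     (\<forall>a \<in> ZD D. \<forall>b \<in> ZD D. p = a * b \<longrightarrow> unitD D a \<or> unitD D b)"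

definition primeD :: "int \<Rightarrow> complex \<Rightarrow> bool" where
  "primeD D p \<longleftrightarrow> p \<in> ZD D \<and> p \<noteq> 0 \<and> \<not> unitD D p \<and>
     (\<forall>a \<in> ZD D. \<forall>b \<in> ZD D. dvdD D p (a * b) \<longrightarrow> dvdD D p a \<or> dvdD D p b)"

definition idealD :: "int \<Rightarrow> complex \<Rightarrow> complex set" where
  "idealD D p = {p * c | c. c \<in> ZD D}"

definition Ip :: "int \<Rightarrow> int \<Rightarrow> complex set" where
  "Ip D p = {z \<in> ZD D. \<not> unitD D z \<and> z \<notin> idealD D (of_int p) \<and>
              (\<exists>m \<in> ZD D. m \<notin> idealD D (of_int p) \<and> z * m \<in> idealD D (of_int p))}"

definition Amat :: "int \<Rightarrow> int \<Rightarrow> complex \<Rightarrow> complex^2^2" where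
  "Amat D p z = vector [vector [of_int p, z], vector [qcnj D z, qnorm D z / of_int p]]"

definition CZ :: "int \<Rightarrow> complex^2^2 \<Rightarrow> bool" where
  "CZ D A \<longleftrightarrow> (\<exists>a \<in> ZD D. \<exists>b \<in> ZD D. \<exists>c \<in> ZD D. a * (1 - a) = b * c \<and>
      A = (vector [vector [a, b], vector [c, 1 - a]] :: complex^2^2) **
          vector [vector [qcnj D a, qcnj D c], vector [qcnj D b, 1 - qcnj D a]])"

end

theory Submission
  imports Defs
begin

lemma sqrtD_sq: "sqrtD D * sqrtD D = of_int D"
proof (cases "D \<ge> 0")
  case True
  have "sqrt (real_of_int D) * sqrt (real_of_int D) = real_of_int D" using True by simp
  then have "complex_of_real (sqrt (real_of_int D)) * complex_of_real (sqrt (real_of_int D)) = complex_of_real (real_of_int D)"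
    by (simp only: of_real_mult[symmetric])
  then show ?thesis using True by (simp add: sqrtD_def)
next
  case False
  have "sqrt (real_of_int (-D)) * sqrt (real_of_int (-D)) = real_of_int (-D)" using False by simp
  then have "complex_of_real (sqrt (real_of_int (-D))) * complex_of_real (sqrt (real_of_int (-D))) = complex_of_real (real_of_int (-D))"
    by (simp only: of_real_mult[symmetric])
  then have "\<i> * complex_of_real (sqrt (real_of_int (-D))) * (\<i> * complex_of_real (sqrt (real_of_int (-D)))) = - complex_of_real (real_of_int (-D))"
    by (simp add: algebra_simps)
  then show ?thesis using False by (simp add: sqrtD_def)
qed

lemma rat_sq_int:
  fixes q :: rat
  assumes "q * q = of_int D" "squarefree D"
  shows "D = 1"
proof -
  obtain a b where ab: "quotient_of q = (a, b)" by (cases "quotient_of q")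
  have b0: "b > 0" using ab quotient_of_denom_pos by blast
  have cop: "coprime a b" using ab quotient_of_coprime by blast
  have q: "q = of_int a / of_int b" using ab quotient_of_div by blast
  have "of_int a * of_int a = (of_int D * of_int b * of_int b :: rat)"
    using assms(1) b0 unfolding q by (simp add: field_simps)
  then have e: "a * a = D * b * b" by (simp only: of_int_mult[symmetric] of_int_eq_iff)
  have "a * a = (b * b) * D" using e by (simp only: ac_simps)
  then have d: "b * b dvd a * a" by (rule dvdI)
  have c2: "coprime (a * a) (b * b)" using cop by simp
  have "is_unit (b * b)" using coprime_absorb_right[OF d] c2 by blast
  then have "is_unit b" using is_unit_mult_iff by blast
  then have "\<bar>b\<bar> = 1" using zdvd1_eq by blast
  then have "b = 1" using b0 by simp
  then have "a ^ 2 dvd D" using e by (simp add: power2_eq_square)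
  then have "is_unit a" using assms(2) squarefreeD by blast
  then have "is_unit (a * a)" using is_unit_mult_iff by blast
  then have "\<bar>a * a\<bar> = 1" using zdvd1_eq by blast
  then have "a * a = 1" by simp
  then show ?thesis using e \<open>b = 1\<close> by simp
qed

lemma sqrtD_irr:
  assumes "squarefree D" "D \<noteq> 1"
  shows "sqrtD D \<noteq> of_rat q"
proof
  assume h: "sqrtD D = of_rat q"
  have "of_rat (q * q) = (of_int D :: complex)" using sqrtD_sq[of D] h by (simp add: of_rat_mult)
  then have "of_rat (q * q) = (of_rat (of_int D) :: complex)" by simp
  then have "q * q = of_int D" by (simp only: of_rat_eq_iff)
  then show False using rat_sq_int assms by blast
qed

definition QD :: "int \<Rightarrow> complex set" where
  "QD D = {of_rat x + of_rat y * sqrtD D | x y. True}"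

lemma rep_unique:
  assumes nr: "\<And>q. sqrtD D \<noteq> of_rat q"
    and e: "of_rat x + of_rat y * sqrtD D = of_rat x' + of_rat y' * sqrtD D"
  shows "x = x' \<and> y = y'"
proof (cases "y = y'")
  case True then show ?thesis using e by simp
next
  case False
  have "of_rat (y - y') * sqrtD D = of_rat (x' - x)" using e by (simp add: of_rat_diff algebra_simps)
  then have "sqrtD D = of_rat ((x' - x) / (y - y'))" using False by (simp add: of_rat_divide field_simps)
  then show ?thesis using nr by blast
qed

lemma qcnj_rep:
  assumes nr: "\<And>q. sqrtD D \<noteq> of_rat q"
  shows "qcnj D (of_rat x + of_rat y * sqrtD D) = of_rat x - of_rat y * sqrtD D"
  unfolding qcnj_def
proof (rule the_equality)
  show "\<exists>x' y'. of_rat x + of_rat y * sqrtD D = of_rat x' + of_rat y' * sqrtD D \<and>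
      of_rat x - of_rat y * sqrtD D = of_rat x' - of_rat y' * sqrtD D" by blast
next
  fix w assume "\<exists>x' y' :: rat. of_rat x + of_rat y * sqrtD D = of_rat x' + of_rat y' * sqrtD D \<and> w = of_rat x' - of_rat y' * sqrtD D"
  then obtain x' y' :: rat where "of_rat x + of_rat y * sqrtD D = of_rat x' + of_rat y' * sqrtD D" "w = of_rat x' - of_rat y' * sqrtD D" by blast
  then show "w = of_rat x - of_rat y * sqrtD D" using rep_unique[OF nr] by metis
qed

lemma QD_add: "u \<in> QD D \<Longrightarrow> v \<in> QD D \<Longrightarrow> u + v \<in> QD D"
  unfolding QD_def
proof clarify
  fix x y x' y' :: rat
  show "\<exists>a b. of_rat x + of_rat y * sqrtD D + (of_rat x' + of_rat y' * sqrtD D) = of_rat a + of_rat b * sqrtD D \<and> True"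
    by (rule exI[of _ "x + x'"], rule exI[of _ "y + y'"]) (simp add: of_rat_add algebra_simps)
qed

lemma QD_diff: "u \<in> QD D \<Longrightarrow> v \<in> QD D \<Longrightarrow> u - v \<in> QD D"
  unfolding QD_def
proof clarify
  fix x y x' y' :: rat
  show "\<exists>a b. of_rat x + of_rat y * sqrtD D - (of_rat x' + of_rat y' * sqrtD D) = of_rat a + of_rat b * sqrtD D \<and> True"
    by (rule exI[of _ "x - x'"], rule exI[of _ "y - y'"]) (simp add: of_rat_diff algebra_simps)
qed

lemma mult_rep: "(of_rat x + of_rat y * sqrtD D) * (of_rat x' + of_rat y' * sqrtD D)
   = of_rat (x * x' + of_int D * y * y') + of_rat (x * y' + y * x') * sqrtD D"
proof -
  have "(of_rat x + of_rat y * sqrtD D) * (of_rat x' + of_rat y' * sqrtD D)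
     = of_rat x * of_rat x' + of_rat y * of_rat y' * (sqrtD D * sqrtD D) + (of_rat x * of_rat y' + of_rat y * of_rat x') * sqrtD D"
    by (simp add: algebra_simps)
  also have "\<dots> = of_rat (x * x' + of_int D * y * y') + of_rat (x * y' + y * x') * sqrtD D"
    by (simp add: sqrtD_sq of_rat_add of_rat_mult algebra_simps)
  finally show ?thesis .
qed

lemma mult_rep': "(of_rat x - of_rat y * sqrtD D) * (of_rat x' - of_rat y' * sqrtD D)
   = of_rat (x * x' + of_int D * y * y') - of_rat (x * y' + y * x') * sqrtD D"
proof -
  have "(of_rat x - of_rat y * sqrtD D) * (of_rat x' - of_rat y' * sqrtD D)
     = of_rat x * of_rat x' + of_rat y * of_rat y' * (sqrtD D * sqrtD D) - (of_rat x * of_rat y' + of_rat y * of_rat x') * sqrtD D"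
    by (simp add: algebra_simps)
  also have "\<dots> = of_rat (x * x' + of_int D * y * y') - of_rat (x * y' + y * x') * sqrtD D"
    by (simp add: sqrtD_sq of_rat_add of_rat_mult algebra_simps)
  finally show ?thesis .
qed

lemma QD_mult: "u \<in> QD D \<Longrightarrow> v \<in> QD D \<Longrightarrow> u * v \<in> QD D"
  unfolding QD_def using mult_rep by blast

lemma QD_of_int: "of_int n \<in> QD D"
  unfolding QD_def by (rule CollectI, rule exI[of _ "of_int n"], rule exI[of _ 0]) simp

lemma QD_one: "1 \<in> QD D" using QD_of_int[of 1 D] by simp

lemma qcnj_add: assumes nr: "\<And>q. sqrtD D \<noteq> of_rat q"
  shows "u \<in> QD D \<Longrightarrow> v \<in> QD D \<Longrightarrow> qcnj D (u + v) = qcnj D u + qcnj D v"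
  unfolding QD_def
proof clarify
  fix x y x' y' :: rat
  have "of_rat x + of_rat y * sqrtD D + (of_rat x' + of_rat y' * sqrtD D) = of_rat (x + x') + of_rat (y + y') * sqrtD D"
    by (simp add: of_rat_add algebra_simps)
  note eq = this
  show "qcnj D (of_rat x + of_rat y * sqrtD D + (of_rat x' + of_rat y' * sqrtD D)) =
       qcnj D (of_rat x + of_rat y * sqrtD D) + qcnj D (of_rat x' + of_rat y' * sqrtD D)"
    unfolding eq qcnj_rep[OF nr] by (simp add: of_rat_add algebra_simps)
qed

lemma qcnj_diff: assumes nr: "\<And>q. sqrtD D \<noteq> of_rat q"
  shows "u \<in> QD D \<Longrightarrow> v \<in> QD D \<Longrightarrow> qcnj D (u - v) = qcnj D u - qcnj D v"
  unfolding QD_def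
proof clarify
  fix x y x' y' :: rat
  have "of_rat x + of_rat y * sqrtD D - (of_rat x' + of_rat y' * sqrtD D) = of_rat (x - x') + of_rat (y - y') * sqrtD D"
    by (simp add: of_rat_diff algebra_simps)
  note eq = this
  show "qcnj D (of_rat x + of_rat y * sqrtD D - (of_rat x' + of_rat y' * sqrtD D)) =
       qcnj D (of_rat x + of_rat y * sqrtD D) - qcnj D (of_rat x' + of_rat y' * sqrtD D)"
    unfolding eq qcnj_rep[OF nr] by (simp add: of_rat_diff algebra_simps)
qed

lemma qcnj_mult: assumes nr: "\<And>q. sqrtD D \<noteq> of_rat q"
  shows "u \<in> QD D \<Longrightarrow> v \<in> QD D \<Longrightarrow> qcnj D (u * v) = qcnj D u * qcnj D v"
  unfolding QD_def
proof clarify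
  fix x y x' y' :: rat
  show "qcnj D ((of_rat x + of_rat y * sqrtD D) * (of_rat x' + of_rat y' * sqrtD D)) =
       qcnj D (of_rat x + of_rat y * sqrtD D) * qcnj D (of_rat x' + of_rat y' * sqrtD D)"
    unfolding mult_rep qcnj_rep[OF nr] mult_rep' ..
qed

lemma qcnj_of_int: assumes nr: "\<And>q. sqrtD D \<noteq> of_rat q"
  shows "qcnj D (of_int n) = of_int n"
  using qcnj_rep[OF nr, of "of_int n" 0] by simp

lemma qcnj_one: assumes nr: "\<And>q. sqrtD D \<noteq> of_rat q"
  shows "qcnj D 1 = 1"
  using qcnj_of_int[OF nr, of 1] by simp

lemma qcnj_QD: assumes nr: "\<And>q. sqrtD D \<noteq> of_rat q"
  shows "u \<in> QD D \<Longrightarrow> qcnj D u \<in> QD D"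
  unfolding QD_def
proof clarify
  fix x y :: rat
  show "\<exists>a b. qcnj D (of_rat x + of_rat y * sqrtD D) = of_rat a + of_rat b * sqrtD D \<and> True"
    by (rule exI[of _ x], rule exI[of _ "-y"]) (simp add: qcnj_rep[OF nr] of_rat_minus)
qed

lemma qcnj_qcnj: assumes nr: "\<And>q. sqrtD D \<noteq> of_rat q"
  shows "u \<in> QD D \<Longrightarrow> qcnj D (qcnj D u) = u"
  unfolding QD_def
proof clarify
  fix x y :: rat
  show "qcnj D (qcnj D (of_rat x + of_rat y * sqrtD D)) = of_rat x + of_rat y * sqrtD D"
    using qcnj_rep[OF nr, of x "-y"] by (simp add: qcnj_rep[OF nr] of_rat_minus)
qed

lemma ZD_QD: "ZD D \<subseteq> QD D"
proof
  fix u assume "u \<in> ZD D"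
  then obtain a b :: int where u: "u = (if D mod 4 = 1 then (of_int a + of_int b * sqrtD D) / 2 else of_int a + of_int b * sqrtD D)"
    unfolding ZD_def by (auto split: if_splits)
  show "u \<in> QD D"
  proof (cases "D mod 4 = 1")
    case True
    have "u = of_rat (of_int a / 2) + of_rat (of_int b / 2) * sqrtD D"
      using True u by (simp add: of_rat_divide add_divide_distrib)
    then show ?thesis unfolding QD_def by blast
  next
    case False
    have "u = of_rat (of_int a) + of_rat (of_int b) * sqrtD D"
      using False u by simp
    then show ?thesis unfolding QD_def by blast
  qed
qed

lemma qcnj_ZD: assumes nr: "\<And>q. sqrtD D \<noteq> of_rat q"
  shows "u \<in> ZD D \<Longrightarrow> qcnj D u \<in> ZD D"
proof -
  assume "u \<in> ZD D"
  then obtain a b :: int where ab: "D mod 4 = 1 \<longrightarrow> a mod 2 = b mod 2" and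
    u: "u = (if D mod 4 = 1 then (of_int a + of_int b * sqrtD D) / 2 else of_int a + of_int b * sqrtD D)"
    unfolding ZD_def by (auto split: if_splits)
  show "qcnj D u \<in> ZD D"
  proof (cases "D mod 4 = 1")
    case True
    have "u = of_rat (of_int a / 2) + of_rat (of_int b / 2) * sqrtD D"
      using True u by (simp add: of_rat_divide add_divide_distrib)
    then have "qcnj D u = of_rat (of_int a / 2) - of_rat (of_int b / 2) * sqrtD D"
      by (simp only: qcnj_rep[OF nr])
    also have "\<dots> = (of_int a + of_int (-b) * sqrtD D) / 2"
      by (simp add: of_rat_divide field_simps)
    finally have "qcnj D u = (of_int a + of_int (-b) * sqrtD D) / 2" .
    moreover have "a mod 2 = (-b) mod 2" using ab True by presburger
    ultimately have "\<exists>a' b' :: int. qcnj D u = (of_int a' + of_int b' * sqrtD D) / 2 \<and> a' mod 2 = b' mod 2"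
      by blast
    then show ?thesis unfolding ZD_def using True by simp
  next
    case False
    have "u = of_rat (of_int a) + of_rat (of_int b) * sqrtD D"
      using False u by simp
    then have "qcnj D u = of_rat (of_int a) - of_rat (of_int b) * sqrtD D"
      by (simp only: qcnj_rep[OF nr])
    then have "qcnj D u = of_int a + of_int (-b) * sqrtD D" by simp
    then have "\<exists>a' b' :: int. qcnj D u = of_int a' + of_int b' * sqrtD D" by blast
    then show ?thesis unfolding ZD_def using False by simp
  qed
qed

lemma mat2_mult: "(vector [vector [a, b], vector [c, d]] :: complex^2^2) ** (vector [vector [e, f], vector [g, h]] :: complex^2^2)
  = vector [vector [a * e + b * g, a * f + b * h], vector [c * e + d * g, c * f + d * h]]"
  by (simp add: matrix_matrix_mult_def vec_eq_iff forall_2 sum_2)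

lemma vec2_eq: "((vector [vector [a, b], vector [c, d]] :: complex^2^2) = vector [vector [a', b'], vector [c', d']])
  \<longleftrightarrow> a = a' \<and> b = b' \<and> c = c' \<and> d = d'"
  by (simp add: vec_eq_iff forall_2)

lemma CZ_conj:
  assumes nr: "\<And>q. sqrtD D \<noteq> of_rat q" and z: "z \<in> ZD D" and cz: "CZ D (Amat D p z)"
  shows "CZ D (Amat D p (qcnj D z))"
proof -
  obtain a b c where a: "a \<in> ZD D" and b: "b \<in> ZD D" and c: "c \<in> ZD D"
    and abc: "a * (1 - a) = b * c"
    and M: "Amat D p z = (vector [vector [a, b], vector [c, 1 - a]] :: complex^2^2) **
          vector [vector [qcnj D a, qcnj D c], vector [qcnj D b, 1 - qcnj D a]]"
    using cz unfolding CZ_def by blast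
  have e: "of_int p = a * qcnj D a + b * qcnj D b \<and> z = a * qcnj D c + b * (1 - qcnj D a) \<and>
     qcnj D z = c * qcnj D a + (1 - a) * qcnj D b \<and> qnorm D z / of_int p = c * qcnj D c + (1 - a) * (1 - qcnj D a)"
    using M unfolding Amat_def mat2_mult vec2_eq .
  then have e1: "of_int p = a * qcnj D a + b * qcnj D b" and e2: "z = a * qcnj D c + b * (1 - qcnj D a)"
    and e3: "qcnj D z = c * qcnj D a + (1 - a) * qcnj D b"
    and e4: "qnorm D z / of_int p = c * qcnj D c + (1 - a) * (1 - qcnj D a)" by blast+
  have aQ: "a \<in> QD D" and bQ: "b \<in> QD D" and cQ: "c \<in> QD D" and zQ: "z \<in> QD D"
    using a b c z ZD_QD by blast+
  have ca: "qcnj D (qcnj D a) = a" and cb: "qcnj D (qcnj D b) = b" and cc: "qcnj D (qcnj D c) = c"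
    and cz2: "qcnj D (qcnj D z) = z"
    using qcnj_qcnj[OF nr] aQ bQ cQ zQ by blast+
  have "qcnj D (a * (1 - a)) = qcnj D (b * c)" using abc by simp
  then have k: "qcnj D a * (1 - qcnj D a) = qcnj D b * qcnj D c"
    using qcnj_mult[OF nr] qcnj_diff[OF nr] qcnj_one[OF nr] aQ bQ cQ QD_one QD_diff by metis
  have nz: "qnorm D (qcnj D z) = qnorm D z"
    unfolding qnorm_def cz2 by simp
  have "qcnj D a \<in> ZD D" "qcnj D b \<in> ZD D" "qcnj D c \<in> ZD D"
    using qcnj_ZD[OF nr] a b c by blast+
  moreover have "Amat D p (qcnj D z) = (vector [vector [qcnj D a, qcnj D b], vector [qcnj D c, 1 - qcnj D a]] :: complex^2^2) **
          vector [vector [qcnj D (qcnj D a), qcnj D (qcnj D c)], vector [qcnj D (qcnj D b), 1 - qcnj D (qcnj D a)]]"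
    unfolding Amat_def mat2_mult vec2_eq ca cb cc cz2 nz
    apply (intro conjI)
    subgoal using e1 by (simp add: algebra_simps)
    subgoal using e3 by (simp add: algebra_simps)
    subgoal using e2 by (simp add: algebra_simps)
    subgoal using e4 by (simp add: algebra_simps)
    done
  ultimately show ?thesis unfolding CZ_def using k by blast
qed

lemma ZD1: "ZD 1 = range of_int"
proof -
  have s: "sqrtD 1 = 1" by (simp add: sqrtD_def)
  show ?thesis
  proof
    show "ZD 1 \<subseteq> range of_int"
    proof
      fix u assume "u \<in> ZD 1"
      then obtain a b :: int where ab: "a mod 2 = b mod 2" and u: "u = (of_int a + of_int b) / 2"
        unfolding ZD_def s by auto
      have "2 dvd a + b" using ab by presburger
      then obtain k where "a + b = 2 * k" by blast
      then have "u = of_int k" unfolding u by (metis (no_types, lifting) nonzero_mult_div_cancel_left of_int_add of_int_mult of_int_numeral zero_neq_numeral)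
      then show "u \<in> range of_int" by blast
    qed
  next
    show "range of_int \<subseteq> ZD 1"
    proof
      fix u :: complex assume "u \<in> range of_int"
      then obtain n where u: "u = of_int n" by blast
      have "u = (of_int n + of_int n * sqrtD 1) / 2" unfolding s u by simp
      then show "u \<in> ZD 1" unfolding ZD_def by auto
    qed
  qed
qed

lemma primeD1:
  fixes p :: int
  assumes "prime p"
  shows "primeD 1 (of_int p)"
  unfolding primeD_def
proof (intro conjI ballI impI)
  show "complex_of_int p \<in> ZD 1" unfolding ZD1 by blast
  show "complex_of_int p \<noteq> 0" using assms by auto
  show "\<not> unitD 1 (of_int p)"
  proof
    assume "unitD 1 (of_int p)"
    then obtain k :: int where "of_int p * (of_int k :: complex) = 1" unfolding unitD_def ZD1 by auto
    then have "p * k = 1" by (metis of_int_eq_1_iff of_int_mult)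
    then have "is_unit p" by (metis dvdI)
    then show False using assms prime_gt_1_int[of p] by simp
  qed
next
  fix a b assume a: "a \<in> ZD 1" and b: "b \<in> ZD 1" and d: "dvdD 1 (of_int p) (a * b)"
  obtain m where m: "a = of_int m" using a unfolding ZD1 by blast
  obtain n where n: "b = of_int n" using b unfolding ZD1 by blast
  obtain k where k: "a * b = of_int p * of_int k" using d unfolding dvdD_def ZD1 by blast
  have "m * n = p * k" using k unfolding m n by (metis of_int_eq_iff of_int_mult)
  then have "p dvd m * n" by simp
  then have "p dvd m \<or> p dvd n" using assms prime_dvd_mult_iff by blast
  then show "dvdD 1 (of_int p) a \<or> dvdD 1 (of_int p) b"
    unfolding dvdD_def ZD1 m n by (auto simp: dvd_def)
qed

theorem corollary2p3:
  fixes D p :: int and z :: complex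
  assumes "squarefree D"
    and "prime p"
    and "irreducibleD D (of_int p)"
    and "\<not> primeD D (of_int p)"
    and "z \<in> Ip D p"
  shows "CZ D (Amat D p z) \<longleftrightarrow> CZ D (Amat D p (qcnj D z))"
proof -
  have "D \<noteq> 1" using assms(2,4) primeD1 by blast
  then have nr: "\<And>q. sqrtD D \<noteq> of_rat q" using sqrtD_irr assms(1) by blast
  have z: "z \<in> ZD D" using assms(5) unfolding Ip_def by blast
  have zc: "qcnj D z \<in> ZD D" using qcnj_ZD[OF nr] z by blast
  have cc: "qcnj D (qcnj D z) = z" using qcnj_qcnj[OF nr] z ZD_QD by blast
  show ?thesis
    using CZ_conj[OF nr z, of p] CZ_conj[OF nr zc, of p] cc by auto
qed

end
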